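(* Let $\varepsilon\in(0,\frac12)$, $z\ge 1$, let $X\subset[\Delta]^d$ be a weighted dataset (with $n$ points), and let $C'$ be a set of $k$ centers that is a constant-factor approximation to $(k,z)$-clustering on $X$. Let $\varepsilon'=\frac{\mathrm{poly}(\varepsilon^z)}{\mathrm{poly}(k,\log(nd\Delta))}$ (for suitable polynomials). Form $X'$ as follows: for each $x\in X$, let $c'(x)$ be the closest center of $C'$ to $x$, let $y$ be the offset $x-c'(x)$ with each coordinate rounded to a power of $(1+\varepsilon')$, let $x'=c'(x)+y$, and give $x'$ the weight of $x$ rounded to a power of $(1+\varepsilon')$. Then for all $C\subset[\Delta]^d$ with $|C|\le k$, \[(1-\varepsilon)\,\mathrm{Cost}(C,X)\le\mathrm{Cost}(C,X')\le(1+\varepsilon)\,\mathrm{Cost}(C,X).\]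
   Context: $\mathrm{Cost}(C,X)=\sum_{x\in X}w(x)\min_{c\in C}\|x-c\|_2^z$ for a weighted set $X$ with weights $w$. $C'$ is a constant-factor approximation if $\mathrm{Cost}(C',X)\le\gamma\min_{|C|\le k}\mathrm{Cost}(C,X)$ for some constant $\gamma\ge1$. Rounding a coordinate to a power of $(1+\varepsilon')$ preserves its sign and changes its absolute value by at most a factor $(1+\varepsilon')$ (zero stays zero). *)

theory Defs
  imports Complex_Main
begin

text \<open>Points of R^d are represented as functions nat => real that vanish
  outside the coordinates 0..d-1 (so that the dimension d can be quantified
  inside the statement).\<close>

definition Rd :: "nat \<Rightarrow> (nat \<Rightarrow> real) set" where
  "Rd d = {x. \<forall>i\<ge>d. x i = 0}"

definition grid :: "nat \<Rightarrow> nat \<Rightarrow> (nat \<Rightarrow> real) set" where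
  "grid d \<Delta> = {x. (\<forall>i<d. x i \<in> \<int> \<and> 1 \<le> x i \<and> x i \<le> real \<Delta>) \<and> (\<forall>i\<ge>d. x i = 0)}"

definition edist :: "nat \<Rightarrow> (nat \<Rightarrow> real) \<Rightarrow> (nat \<Rightarrow> real) \<Rightarrow> real" where
  "edist d x y = sqrt (\<Sum>i<d. (x i - y i)^2)"

text \<open>Cost(C,X) for the weighted dataset X = {(p i, w i) | i in I}.\<close>
definition cost :: "nat \<Rightarrow> real \<Rightarrow> (nat \<Rightarrow> real) set \<Rightarrow> nat set \<Rightarrow> (nat \<Rightarrow> nat \<Rightarrow> real)
    \<Rightarrow> (nat \<Rightarrow> real) \<Rightarrow> real" where
  "cost d z C I p w = (\<Sum>i\<in>I. w i * Min ((\<lambda>c. edist d (p i) c powr z) ` C))"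

definition opt :: "nat \<Rightarrow> real \<Rightarrow> nat \<Rightarrow> nat set \<Rightarrow> (nat \<Rightarrow> nat \<Rightarrow> real) \<Rightarrow> (nat \<Rightarrow> real) \<Rightarrow> real" where
  "opt d z k I p w = Inf {cost d z C I p w | C. C \<subseteq> Rd d \<and> finite C \<and> C \<noteq> {} \<and> card C \<le> k}"

definition rounds :: "real \<Rightarrow> real \<Rightarrow> real \<Rightarrow> bool" where
  "rounds e t s \<longleftrightarrow> sgn s = sgn t \<and>
     (t \<noteq> 0 \<longrightarrow> (\<exists>j::int. \<bar>s\<bar> = (1 + e) powi j) \<and> \<bar>t\<bar> \<le> (1 + e) * \<bar>s\<bar> \<and> \<bar>s\<bar> \<le> (1 + e) * \<bar>t\<bar>)"

end

theory Submission imports Defs "HOL-Analysis.L2_Norm" "HOL-Library.FuncSet" begin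

lemma edist_L2: "edist d x y = L2_set (\<lambda>i. x i - y i) {..<d}"
  by (simp add: edist_def L2_set_def)

lemma edist_sym: "edist d x y = edist d y x"
  unfolding edist_def by (simp add: power2_commute)

lemma edist_nonneg: "0 \<le> edist d x y"
  unfolding edist_def by (simp add: sum_nonneg)

lemma edist_tri: "edist d x z \<le> edist d x y + edist d y z"
proof -
  have "edist d x z = L2_set (\<lambda>i. (x i - y i) + (y i - z i)) {..<d}"
    by (simp add: edist_L2)
  also have "\<dots> \<le> edist d x y + edist d y z"
    unfolding edist_L2 by (rule L2_set_triangle_ineq)
  finally show ?thesis .
qed

lemma key_pow:
  fixes A B \<delta> \<eta> z :: real
  assumes "0 \<le> A" "0 \<le> B" "0 \<le> \<delta>" "B \<le> A + \<delta>" "\<eta> > 0" "z \<ge> 0"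
  shows "B powr z \<le> (1+\<eta>) powr z * A powr z + ((1 + 1/\<eta>) * \<delta>) powr z"
proof (cases "\<delta> \<le> \<eta> * A")
  case True
  then have "B \<le> (1+\<eta>) * A" using assms by (simp add: algebra_simps)
  then have "B powr z \<le> ((1+\<eta>) * A) powr z" using assms by (intro powr_mono2) auto
  also have "\<dots> = (1+\<eta>) powr z * A powr z" using assms by (simp add: powr_mult)
  moreover have "0 \<le> ((1 + 1/\<eta>) * \<delta>) powr z" by simp
  ultimately show ?thesis by linarith
next
  case False
  then have "A \<le> \<delta> / \<eta>" using assms by (simp add: field_simps)
  then have "B \<le> (1 + 1/\<eta>) * \<delta>" using assms by (simp add: algebra_simps)
  then have "B powr z \<le> ((1 + 1/\<eta>) * \<delta>) powr z" using assms by (intro powr_mono2) auto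
  moreover have "0 \<le> (1+\<eta>) powr z * A powr z" by simp
  ultimately show ?thesis by linarith
qed

lemma min_bound:
  assumes "finite C" "C \<noteq> {}" "\<And>c. c \<in> C \<Longrightarrow> f c \<le> \<alpha> * g c + E" "\<alpha> \<ge> 0"
  shows "Min (f ` C) \<le> \<alpha> * Min (g ` C) + (E::real)"
proof -
  have "Min (g ` C) \<in> g ` C" using assms by (intro Min_in) auto
  then obtain c0 where c0: "c0 \<in> C" "g c0 = Min (g ` C)" by auto
  have "Min (f ` C) \<le> f c0" by (rule Min_le) (use assms c0 in auto)
  also have "\<dots> \<le> \<alpha> * g c0 + E" by (rule assms(3)[OF c0(1)])
  finally show ?thesis using c0 by simp
qed

lemma round_disp:
  assumes "rounds e t s" "0 \<le> e" "e \<le> 1"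
  shows "\<bar>s - t\<bar> \<le> 2 * e * \<bar>t\<bar>"
proof (cases "t = 0")
  case True
  then show ?thesis using assms by (simp add: rounds_def sgn_0_0)
next
  case False
  then have h: "sgn s = sgn t" "\<bar>t\<bar> \<le> (1 + e) * \<bar>s\<bar>" "\<bar>s\<bar> \<le> (1 + e) * \<bar>t\<bar>"
    using assms by (auto simp: rounds_def)
  have a: "e * \<bar>s\<bar> \<le> e * ((1+e) * \<bar>t\<bar>)" using h assms by (intro mult_left_mono) auto
  have "e * (e * \<bar>t\<bar>) \<le> e * \<bar>t\<bar>" using assms by (intro mult_left_le_one_le) auto
  then have b: "e * ((1+e) * \<bar>t\<bar>) \<le> 2 * e * \<bar>t\<bar>" by (simp add: algebra_simps)
  have "\<bar>s - t\<bar> = \<bar>\<bar>s\<bar> - \<bar>t\<bar>\<bar>" using h(1)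
    by (cases "s > 0"; cases "s < 0"; cases "t > 0"; cases "t < 0"; auto simp: sgn_if split: if_splits)
  moreover have "\<bar>s\<bar> - \<bar>t\<bar> \<le> 2 * e * \<bar>t\<bar>"
  proof -
    have "\<bar>s\<bar> \<le> \<bar>t\<bar> + e * \<bar>t\<bar>" using h(3) by (simp add: algebra_simps)
    moreover have "e * \<bar>t\<bar> \<le> 2 * e * \<bar>t\<bar>" using assms by simp
    ultimately show ?thesis by linarith
  qed
  moreover have "\<bar>t\<bar> - \<bar>s\<bar> \<le> 2 * e * \<bar>t\<bar>"
  proof -
    have "\<bar>t\<bar> \<le> \<bar>s\<bar> + e * \<bar>s\<bar>" using h(2) by (simp add: algebra_simps)
    then show ?thesis using a b by linarith
  qed
  ultimately show ?thesis by (simp add: abs_le_iff)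
qed

lemma disp_edist:
  assumes "\<And>j. j < d \<Longrightarrow> rounds e (p j - q j) (y j)" "0 \<le> e" "e \<le> 1"
  shows "edist d (\<lambda>j. q j + y j) p \<le> 2 * e * edist d p q"
proof -
  have "(\<Sum>j<d. ((q j + y j) - p j)^2) \<le> (\<Sum>j<d. (2*e)^2 * (p j - q j)^2)"
  proof (rule sum_mono)
    fix j assume "j \<in> {..<d}"
    then have "\<bar>y j - (p j - q j)\<bar> \<le> 2 * e * \<bar>p j - q j\<bar>" using assms round_disp by auto
    then have "\<bar>y j - (p j - q j)\<bar>^2 \<le> (2 * e * \<bar>p j - q j\<bar>)^2" by (intro power_mono) auto
    then show "((q j + y j) - p j)^2 \<le> (2*e)^2 * (p j - q j)^2"
      by (simp add: power_mult_distrib algebra_simps)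
  qed
  then have "edist d (\<lambda>j. q j + y j) p \<le> sqrt ((2*e)^2 * (\<Sum>j<d. (p j - q j)^2))"
    unfolding edist_def by (simp add: sum_distrib_left)
  also have "\<dots> = 2 * e * edist d p q" using assms
    by (simp add: edist_def real_sqrt_mult)
  finally show ?thesis .
qed


lemma min_nonneg:
  assumes "finite C" "C \<noteq> {}" "\<And>c. c \<in> C \<Longrightarrow> (0::real) \<le> f c"
  shows "0 \<le> Min (f ` C)"
  using assms by (simp add: Min_ge_iff)

lemma cost_nonneg:
  assumes "finite C" "C \<noteq> {}" "\<forall>i\<in>I. w i \<ge> 0"
  shows "0 \<le> cost d z C I p w"
  unfolding cost_def using assms
  by (intro sum_nonneg mult_nonneg_nonneg min_nonneg) auto

lemma main_lemma:
  fixes \<gamma> \<epsilon> z e :: real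
  assumes g: "\<gamma> \<ge> 1" and eps: "0 < \<epsilon>" "\<epsilon> < 1/2" and z: "z \<ge> 1"
    and I: "finite I" and w: "\<forall>i\<in>I. w i > 0"
    and C': "finite C'" "C' \<noteq> {}" and opt: "cost d z C' I p w \<le> \<gamma> * opt d z k I p w"
    and cl: "\<forall>i\<in>I. cl i \<in> C' \<and> (\<forall>c\<in>C'. edist d (p i) (cl i) \<le> edist d (p i) c)"
    and e: "0 < e" "e \<le> \<epsilon>^2 / (54 * \<gamma> * z)"
    and rd: "\<forall>i\<in>I. (\<forall>j<d. rounds e (p i j - cl i j) (y i j)) \<and> rounds e (w i) (w' i)"
    and C: "C \<subseteq> Rd d" "finite C" "C \<noteq> {}" "card C \<le> k"
  shows "(1 - \<epsilon>) * cost d z C I p w \<le> cost d z C I (\<lambda>i j. cl i j + y i j) w' \<and>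
         cost d z C I (\<lambda>i j. cl i j + y i j) w' \<le> (1 + \<epsilon>) * cost d z C I p w"
proof -
  define q where "q i = (\<lambda>j. cl i j + y i j)" for i
  define m where "m i = Min ((\<lambda>c. edist d (p i) c powr z) ` C)" for i
  define m' where "m' i = Min ((\<lambda>c. edist d (q i) c powr z) ` C)" for i
  define r where "r i = edist d (p i) (cl i)" for i
  define \<eta> where "\<eta> = \<epsilon> / (8 * z)"
  define K where "K = 1 + 1 / \<eta>"
  define \<alpha>0 where "\<alpha>0 = (1 + \<eta>) powr z"
  define \<beta>0 where "\<beta>0 = (2 * K * e) powr z"
  define E where "E i = (K * edist d (q i) (p i)) powr z" for i
  have \<eta>pos: "\<eta> > 0" using eps z by (simp add: \<eta>_def)
  have Kpos: "K > 0" using \<eta>pos by (simp add: K_def add_pos_pos)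
  have gz: "\<gamma> * z \<ge> 1" using g z mult_mono[of 1 \<gamma> 1 z] by simp
  have "\<epsilon>^2 / (54 * \<gamma> * z) \<le> \<epsilon>^2 / 54"
    using gz eps by (intro divide_left_mono) (auto simp: mult.assoc)
  also have "\<dots> \<le> \<epsilon> / 54" using eps by (simp add: power2_eq_square)
  finally have e54: "e \<le> \<epsilon> / 54" using e by linarith
  have e1: "e \<le> \<epsilon> / 24" "e \<le> 1" using e54 eps by auto
  define X where "X = \<epsilon> / (54 * \<gamma>)"
  have ze: "z * e \<le> \<epsilon> * X"
  proof -
    have "z * e \<le> z * (\<epsilon>^2 / (54 * \<gamma> * z))" using e z by (intro mult_left_mono) auto
    also have "\<dots> = \<epsilon> * X" using z by (simp add: X_def power2_eq_square field_simps)
    finally show ?thesis .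
  qed
  have eX: "e \<le> X"
  proof -
    have "e \<le> z * e" using z e by simp
    also have "\<dots> \<le> \<epsilon> * X" by (rule ze)
    also have "\<dots> \<le> X" using eps g by (simp add: X_def field_simps)
    finally show ?thesis .
  qed
  have "2 * K * e = 2 * e + 16 * (z * e) / \<epsilon>"
    using eps z by (simp add: K_def \<eta>_def field_simps)
  also have "\<dots> \<le> 2 * X + 16 * (\<epsilon> * X) / \<epsilon>"
    using eX ze eps by (intro add_mono divide_right_mono) auto
  also have "\<dots> = \<epsilon> / (3 * \<gamma>)" using eps g by (simp add: X_def field_simps)
  finally have KE: "2 * K * e \<le> \<epsilon> / (3 * \<gamma>)" .
  have "\<beta>0 \<le> (\<epsilon> / (3 * \<gamma>)) powr z"
    unfolding \<beta>0_def using KE Kpos e z by (intro powr_mono2) auto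
  also have "\<dots> \<le> (\<epsilon> / (3 * \<gamma>)) powr 1"
    using z eps g by (intro powr_mono') (auto simp: field_simps)
  finally have \<beta>0b: "\<beta>0 \<le> \<epsilon> / (3 * \<gamma>)" using eps g by simp
  have "\<alpha>0 \<le> (exp \<eta>) powr z"
    unfolding \<alpha>0_def using \<eta>pos z by (intro powr_mono2) (auto simp: add.commute)
  also have "\<dots> = exp (\<epsilon> / 8)" using z by (simp add: powr_def \<eta>_def)
  also have "\<dots> \<le> 1 + 2 * (\<epsilon> / 8)"
    using exp_bound_lemma[of "\<epsilon> / 8"] eps by simp
  finally have \<alpha>0b: "\<alpha>0 \<le> 1 + \<epsilon> / 4" by simp
  have \<alpha>0pos: "\<alpha>0 \<ge> 0" by (simp add: \<alpha>0_def)
  have ae: "(1 + e) * \<alpha>0 \<le> 1 + \<epsilon> / 3"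
  proof -
    have "(1 + e) * \<alpha>0 \<le> (1 + \<epsilon> / 24) * (1 + \<epsilon> / 4)"
      using e1 \<alpha>0b \<alpha>0pos e by (intro mult_mono) auto
    also have "\<dots> \<le> 1 + \<epsilon> / 3" using eps by (simp add: field_simps power2_eq_square)
    finally show ?thesis .
  qed
  have ww: "w' i > 0 \<and> w' i \<le> (1 + e) * w i \<and> w i \<le> (1 + e) * w' i" if "i \<in> I" for i
  proof -
    have "rounds e (w i) (w' i)" "w i > 0" using rd w that by auto
    then show ?thesis unfolding rounds_def by (auto simp: sgn_if split: if_splits)
  qed
  have mnn: "m i \<ge> 0" "m' i \<ge> 0" for i
    unfolding m_def m'_def using C by (auto intro!: min_nonneg)
  have costX: "cost d z C I p w = (\<Sum>i\<in>I. w i * m i)" by (simp add: cost_def m_def)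
  have costX': "cost d z C I (\<lambda>i j. cl i j + y i j) w' = (\<Sum>i\<in>I. w' i * m' i)"
    by (simp add: cost_def m'_def q_def)
  have costC': "cost d z C' I p w = (\<Sum>i\<in>I. w i * r i powr z)"
    unfolding cost_def
  proof (rule sum.cong)
    fix i assume i: "i \<in> I"
    have "Min ((\<lambda>c. edist d (p i) c powr z) ` C') = r i powr z"
      using cl i C' z unfolding r_def
      by (intro Min_eqI) (auto intro!: powr_mono2 simp: edist_nonneg)
    then show "w i * Min ((\<lambda>c. edist d (p i) c powr z) ` C') = w i * r i powr z" by simp
  qed simp
  have costpos: "cost d z C I p w \<ge> 0" using C w by (intro cost_nonneg) auto
  have optle: "opt d z k I p w \<le> cost d z C I p w"
    unfolding opt_def
  proof (rule cInf_lower)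
    show "cost d z C I p w \<in> {cost d z C I p w |C. C \<subseteq> Rd d \<and> finite C \<and> C \<noteq> {} \<and> card C \<le> k}"
      using C by auto
    show "bdd_below {cost d z C I p w |C. C \<subseteq> Rd d \<and> finite C \<and> C \<noteq> {} \<and> card C \<le> k}"
      using w by (intro bdd_belowI[of _ 0]) (auto intro!: cost_nonneg)
  qed
  have Eb: "E i \<le> \<beta>0 * r i powr z" if "i \<in> I" for i
  proof -
    have "edist d (q i) (p i) \<le> 2 * e * r i"
      unfolding q_def r_def using rd that e1 e by (intro disp_edist) auto
    then have "E i \<le> (K * (2 * e * r i)) powr z"
      unfolding E_def using Kpos z by (intro powr_mono2) (auto simp: edist_nonneg)
    also have "\<dots> = \<beta>0 * r i powr z"
      using Kpos e by (simp add: \<beta>0_def powr_mult r_def edist_nonneg mult.assoc)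
    finally show ?thesis .
  qed
  have sumE: "(\<Sum>i\<in>I. w i * E i) \<le> \<epsilon> / 3 * cost d z C I p w"
  proof -
    have "(\<Sum>i\<in>I. w i * E i) \<le> (\<Sum>i\<in>I. w i * (\<beta>0 * r i powr z))"
      using Eb w by (intro sum_mono mult_left_mono) auto
    also have "\<dots> = \<beta>0 * cost d z C' I p w"
      by (simp add: costC' sum_distrib_left algebra_simps)
    also have "\<dots> \<le> \<beta>0 * (\<gamma> * cost d z C I p w)"
    proof (intro mult_left_mono)
      show "cost d z C' I p w \<le> \<gamma> * cost d z C I p w"
        using order_trans[OF opt mult_left_mono[OF optle]] g by simp
    qed (simp add: \<beta>0_def)
    also have "\<dots> \<le> \<epsilon> / (3 * \<gamma>) * (\<gamma> * cost d z C I p w)"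
      using \<beta>0b costpos g by (intro mult_right_mono) auto
    also have "\<dots> = \<epsilon> / 3 * cost d z C I p w" using g by simp
    finally show ?thesis .
  qed
  have Enn: "E i \<ge> 0" for i by (simp add: E_def)
  have sEnn: "0 \<le> (\<Sum>i\<in>I. w i * E i)"
    using w Enn by (intro sum_nonneg mult_nonneg_nonneg) (auto simp: less_imp_le)
  have up: "m' i \<le> \<alpha>0 * m i + E i" for i
    unfolding m'_def m_def using C \<alpha>0pos
  proof (intro min_bound)
    fix c assume "c \<in> C"
    have "edist d (q i) c \<le> edist d (p i) c + edist d (q i) (p i)"
      using edist_tri[of d "q i" c "p i"] by simp
    then show "edist d (q i) c powr z \<le> \<alpha>0 * edist d (p i) c powr z + E i"
      unfolding \<alpha>0_def E_def K_def using \<eta>pos z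
      by (intro key_pow) (auto simp: edist_nonneg)
  qed auto
  have lo: "m i \<le> \<alpha>0 * m' i + E i" for i
    unfolding m'_def m_def using C \<alpha>0pos
  proof (intro min_bound)
    fix c assume "c \<in> C"
    have "edist d (p i) c \<le> edist d (q i) c + edist d (q i) (p i)"
      using edist_tri[of d "p i" c "q i"] edist_sym[of d "p i" "q i"] by simp
    then show "edist d (p i) c powr z \<le> \<alpha>0 * edist d (q i) c powr z + E i"
      unfolding \<alpha>0_def E_def K_def using \<eta>pos z
      by (intro key_pow) (auto simp: edist_nonneg)
  qed auto
  have "(\<Sum>i\<in>I. w' i * m' i) \<le> (\<Sum>i\<in>I. ((1 + e) * \<alpha>0) * (w i * m i) + (1 + e) * (w i * E i))"
  proof (rule sum_mono)
    fix i assume i: "i \<in> I"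
    have "w' i * m' i \<le> ((1 + e) * w i) * (\<alpha>0 * m i + E i)"
      using ww[OF i] up[of i] mnn[of i] w i by (intro mult_mono) auto
    then show "w' i * m' i \<le> ((1 + e) * \<alpha>0) * (w i * m i) + (1 + e) * (w i * E i)"
      by (simp add: algebra_simps)
  qed
  also have "\<dots> = ((1 + e) * \<alpha>0) * cost d z C I p w + (1 + e) * (\<Sum>i\<in>I. w i * E i)"
    by (simp add: costX sum.distrib sum_distrib_left)
  also have "\<dots> \<le> (1 + \<epsilon> / 3) * cost d z C I p w + (1 + \<epsilon>/24) * (\<epsilon> / 3 * cost d z C I p w)"
    using ae costpos sumE e1 e w sEnn
    by (intro add_mono mult_right_mono mult_mono) auto
  also have "\<dots> \<le> (1 + \<epsilon>) * cost d z C I p w"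
  proof -
    have ee: "\<epsilon> * \<epsilon> \<le> \<epsilon>" using eps by (intro mult_left_le_one_le) auto
    have coef: "1 + \<epsilon> / 3 + (1 + \<epsilon>/24) * (\<epsilon> / 3) \<le> 1 + \<epsilon>"
    proof -
      have "(1 + \<epsilon>/24) * (\<epsilon> / 3) = \<epsilon> / 3 + (\<epsilon> * \<epsilon>) / 72" by (simp add: algebra_simps)
      then show ?thesis using ee eps by linarith
    qed
    have "(1 + \<epsilon> / 3) * cost d z C I p w + (1 + \<epsilon>/24) * (\<epsilon> / 3 * cost d z C I p w)
        = (1 + \<epsilon> / 3 + (1 + \<epsilon>/24) * (\<epsilon> / 3)) * cost d z C I p w"
      by (simp add: field_simps)
    also have "\<dots> \<le> (1 + \<epsilon>) * cost d z C I p w" using coef costpos by (rule mult_right_mono)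
    finally show ?thesis .
  qed
  finally have U: "cost d z C I (\<lambda>i j. cl i j + y i j) w' \<le> (1 + \<epsilon>) * cost d z C I p w"
    using costX' by simp
  have "(\<Sum>i\<in>I. w i * m i) \<le> (\<Sum>i\<in>I. ((1 + e) * \<alpha>0) * (w' i * m' i) + w i * E i)"
  proof (rule sum_mono)
    fix i assume i: "i \<in> I"
    have "w i * m i \<le> w i * (\<alpha>0 * m' i + E i)"
      using lo[of i] w i by (intro mult_left_mono) auto
    also have "\<dots> = (w i * \<alpha>0 * m' i) + w i * E i" by (simp add: algebra_simps)
    also have "w i * \<alpha>0 * m' i \<le> ((1 + e) * w' i) * \<alpha>0 * m' i"
      using ww[OF i] mnn[of i] \<alpha>0pos by (intro mult_right_mono) auto
    finally show "w i * m i \<le> ((1 + e) * \<alpha>0) * (w' i * m' i) + w i * E i"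
      by (simp add: algebra_simps)
  qed
  also have "\<dots> = ((1 + e) * \<alpha>0) * cost d z C I (\<lambda>i j. cl i j + y i j) w' + (\<Sum>i\<in>I. w i * E i)"
    by (simp add: costX' sum.distrib sum_distrib_left)
  also have "\<dots> \<le> (1 + \<epsilon> / 3) * cost d z C I (\<lambda>i j. cl i j + y i j) w' + \<epsilon> / 3 * cost d z C I p w"
  proof (rule add_mono)
    have "0 \<le> cost d z C I (\<lambda>i j. cl i j + y i j) w'"
      unfolding costX' using mnn ww by (intro sum_nonneg mult_nonneg_nonneg) (auto simp: less_imp_le)
    then show "((1 + e) * \<alpha>0) * cost d z C I (\<lambda>i j. cl i j + y i j) w'
        \<le> (1 + \<epsilon> / 3) * cost d z C I (\<lambda>i j. cl i j + y i j) w'"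
      using ae by (rule mult_right_mono[rotated])
  qed (rule sumE)
  finally have L0: "cost d z C I p w * (1 - \<epsilon> / 3) \<le> (1 + \<epsilon> / 3) * cost d z C I (\<lambda>i j. cl i j + y i j) w'"
    using costX by (simp add: algebra_simps)
  have "(1 - \<epsilon>) * cost d z C I p w * (1 + \<epsilon> / 3) \<le> cost d z C I p w * (1 - \<epsilon> / 3)"
    using costpos eps by (simp add: algebra_simps mult_left_mono power2_eq_square)
  then have "(1 - \<epsilon>) * cost d z C I p w * (1 + \<epsilon> / 3) \<le> cost d z C I (\<lambda>i j. cl i j + y i j) w' * (1 + \<epsilon> / 3)"
    using L0 by (simp add: mult.commute)
  then have L: "(1 - \<epsilon>) * cost d z C I p w \<le> cost d z C I (\<lambda>i j. cl i j + y i j) w'"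
    using eps by (simp add: mult_le_cancel_right)
  show ?thesis using L U by simp
qed


lemma e_bound:
  fixes \<epsilon> z \<gamma> :: real
  assumes "0 < \<epsilon>" "\<epsilon> < 1/2" "z \<ge> 1" "\<gamma> \<ge> 1"
  shows "1 / (54 * \<gamma>) * (\<epsilon> powr z)^2 \<le> \<epsilon>^2 / (54 * \<gamma> * z)"
proof -
  define P where "P = (\<epsilon>^2) powr (z - 1)"
  have "\<epsilon>^2 \<le> (1/2)^2" using assms by (intro power_mono) auto
  then have "P \<le> (1/4) powr (z - 1)" unfolding P_def using assms
    by (intro powr_mono2) (auto simp: power2_eq_square)
  also have "\<dots> = 1 / 4 powr (z - 1)" by (simp add: powr_divide)
  finally have P1: "P \<le> 1 / 4 powr (z - 1)" .
  have ln4: "1 \<le> ln (4::real)" using exp_le by (subst ln_ge_iff) auto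
  have "(z - 1) * 1 \<le> (z - 1) * ln 4" using ln4 assms by (intro mult_left_mono) auto
  then have "z \<le> 1 + (z - 1) * ln 4" by simp
  also have "\<dots> \<le> exp ((z - 1) * ln 4)" by (rule exp_ge_add_one_self)
  also have "\<dots> = 4 powr (z - 1)" by (simp add: powr_def mult.commute)
  finally have z4: "z \<le> 4 powr (z - 1)" .
  have Pz: "P \<le> 1 / z"
  proof -
    have "1 / 4 powr (z - 1) \<le> 1 / z" using z4 assms by (intro divide_left_mono) auto
    then show ?thesis using P1 by linarith
  qed
  have "(\<epsilon> powr z)^2 = \<epsilon> powr z * \<epsilon> powr z" by (simp add: power2_eq_square)
  also have "\<dots> = \<epsilon> powr (z + z)" by (rule powr_add[symmetric])
  also have "\<dots> = \<epsilon> powr 2 * \<epsilon> powr (2 * (z - 1))" by (subst powr_add[symmetric]) (simp add: algebra_simps)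
  also have "\<dots> = \<epsilon>^2 * P"
  proof -
    have E2: "\<epsilon> powr 2 = \<epsilon>^2" using assms by (simp add: powr_numeral)
    have "\<epsilon> powr (2 * (z - 1)) = (\<epsilon> powr 2) powr (z - 1)" by (simp add: powr_powr)
    then show ?thesis unfolding P_def E2 by simp
  qed
  finally have "(\<epsilon> powr z)^2 = \<epsilon>^2 * P" .
  then have "1 / (54 * \<gamma>) * (\<epsilon> powr z)^2 \<le> 1 / (54 * \<gamma>) * (\<epsilon>^2 * (1 / z))"
  proof -
    have "\<epsilon>^2 * P \<le> \<epsilon>^2 * (1 / z)" by (rule mult_left_mono[OF Pz]) simp
    then show ?thesis using \<open>(\<epsilon> powr z)^2 = \<epsilon>^2 * P\<close> assms by (intro mult_left_mono) auto
  qed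
  then show ?thesis by simp
qed

lemma grid_finite: "finite (grid d \<Delta>)"
proof -
  let ?F = "(\<lambda>f i. if i < d then f i else 0) ` (PiE {..<d} (\<lambda>_. real ` {1..\<Delta>}))"
  have "grid d \<Delta> \<subseteq> ?F"
  proof
    fix x assume x: "x \<in> grid d \<Delta>"
    have "restrict x {..<d} \<in> PiE {..<d} (\<lambda>_. real ` {1..\<Delta>})"
    proof (rule restrict_PiE_iff[THEN iffD2], intro ballI)
      fix i assume "i \<in> {..<d}"
      then have xi: "x i \<in> \<int>" "1 \<le> x i" "x i \<le> real \<Delta>" using x by (auto simp: grid_def)
      then obtain m where m: "x i = of_int m" by (auto elim: Ints_cases)
      then have "x i = real (nat m)" using xi by simp
      moreover have "nat m \<in> {1..\<Delta>}" using xi m by auto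
      ultimately show "x i \<in> real ` {1..\<Delta>}" by blast
    qed
    moreover have "x = (\<lambda>i. if i < d then restrict x {..<d} i else 0)"
      using x by (auto simp: grid_def)
    ultimately show "x \<in> ?F" by blast
  qed
  moreover have "finite ?F" by (intro finite_imageI finite_PiE) auto
  ultimately show ?thesis by (rule finite_subset)
qed

lemma grid_Rd: "grid d \<Delta> \<subseteq> Rd d"
  by (auto simp: grid_def Rd_def)

theorem lemma2p6:
  fixes \<gamma> :: real
  assumes "\<gamma> \<ge> 1"
  shows "\<exists>c>0. \<exists>a b :: nat. \<forall>(\<epsilon>::real) (z::real) (d::nat) (\<Delta>::nat) (k::nat) (I::nat set)
      (p::nat \<Rightarrow> nat \<Rightarrow> real) (w::nat \<Rightarrow> real) (C'::(nat \<Rightarrow> real) set) (cl::nat \<Rightarrow> nat \<Rightarrow> real)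
      (e::real) (y::nat \<Rightarrow> nat \<Rightarrow> real) (w'::nat \<Rightarrow> real).
    0 < \<epsilon> \<and> \<epsilon> < 1/2 \<and> z \<ge> 1 \<and> d \<ge> 1 \<and> \<Delta> \<ge> 1 \<and> k \<ge> 1 \<and> finite I \<and> I \<noteq> {} \<and>
    (\<forall>i\<in>I. p i \<in> grid d \<Delta> \<and> w i > 0) \<and>
    C' \<subseteq> Rd d \<and> finite C' \<and> card C' = k \<and>
    cost d z C' I p w \<le> \<gamma> * opt d z k I p w \<and>
    (\<forall>i\<in>I. cl i \<in> C' \<and> (\<forall>c\<in>C'. edist d (p i) (cl i) \<le> edist d (p i) c)) \<and>
    e = c * (\<epsilon> powr z) ^ a / (real k * (1 + ln (real (card I * d * \<Delta>)))) ^ b \<and>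
    (\<forall>i\<in>I. (\<forall>j<d. rounds e (p i j - cl i j) (y i j)) \<and> (\<forall>j\<ge>d. y i j = 0) \<and> rounds e (w i) (w' i))
    \<longrightarrow> (\<forall>C. C \<subseteq> grid d \<Delta> \<and> C \<noteq> {} \<and> card C \<le> k \<longrightarrow>
          (1 - \<epsilon>) * cost d z C I p w \<le> cost d z C I (\<lambda>i j. cl i j + y i j) w' \<and>
          cost d z C I (\<lambda>i j. cl i j + y i j) w' \<le> (1 + \<epsilon>) * cost d z C I p w)"
proof -
  let ?c = "1 / (54 * \<gamma>)"
  have pos: "?c > 0" using assms by simp
  show ?thesis
    apply (rule exI[of _ ?c], rule conjI[OF pos], rule exI[of _ 2], rule exI[of _ 0])
    apply (intro allI impI)
    apply (elim conjE)
    subgoal for \<epsilon> z d \<Delta> k I p w C' cl e y w' C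
      apply (rule main_lemma[where \<gamma>=\<gamma> and C'=C' and k=k and e=e])
      using assms e_bound[of \<epsilon> z \<gamma>] grid_finite[of d \<Delta>] grid_Rd[of d \<Delta>]
      by (auto intro: finite_subset)
    done
qed

end
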